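(* Let $\lambda,\mu\in\mathcal{A}_{k,n}$ and $\nu\in\mathcal{P}_k^+$, and let $\check\nu\in\mathcal{A}_{k,n}$ be the unique element of the orbit $\nu\hat S_k$ lying in $\mathcal{A}_{k,n}$. Then $$N^\lambda_{\mu\nu}=N^\lambda_{\mu\check\nu}\binom{m_n(\check\nu)}{m_0(\nu),m_n(\nu),m_{2n}(\nu),\dots}\prod_{i=1}^{n-1}\binom{m_i(\check\nu)}{m_i(\nu),m_{i+n}(\nu),m_{i+2n}(\nu),\dots}.$$
   Context: Fix $k,n\ge1$. $\mathcal{P}_k^+$ is the set of $\nu\in\mathbb{Z}^k$ with $\nu_1\ge\cdots\ge\nu_k\ge0$; each such $\nu$ is extended to $\nu:\mathbb{Z}\to\mathbb{Z}$ by $\nu_{i+k}=\nu_i-n$. $\mathcal{A}_{k,n}$ is the set of such functions with $n\ge\nu_1\ge\cdots\ge\nu_k>0$. $\hat S_k$ is the group of bijections of $\mathbb{Z}$ generated by $\tau(m)=m-1$ and $\sigma_i$ ($0\le i<k$; $\sigma_i(m)=m+1$ if $m\equiv i$, $m-1$ if $m\equiv i+1$, $m$ otherwise, mod $k$), acting by $(\nu\circ\hat w)_i=\nu_{\hat w(i)}$; $\mathcal{A}_{k,n}$ meets each orbit in exactly one point. $m_j(\nu)=\#\{i\in[k]:\nu_i=j\}$. For $\nu\in\mathbb{Z}^k$ and $w\in S_k$, $\nu\circ w=(\nu_{w(1)},\dots,\nu_{w(k)})$; $S_\nu$ is its stabiliser and $S^\nu$ the minimal length representatives of $S_\nu\backslash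 S_k$. For $\lambda,\mu\in\mathcal{A}_{k,n}$, $\nu\in\mathcal{P}_k^+$: $N^\lambda_{\mu\nu}=\#\{(w,w')\in S^\mu\times S^\nu:\mu\circ w+\nu\circ w'=(\lambda_1+n\alpha_1,\dots,\lambda_k+n\alpha_k)\text{ for some }\alpha\in\mathbb{Z}^k\text{ with }\sum\alpha_i=d\}$, where $d=(|\mu|+|\nu|-|\lambda|)/n$ and $|\cdot|$ is the sum of the $k$ entries (these are the coefficients of $h_\nu$ in the expansion of the cylindric complete symmetric function $h_{\lambda/d/\mu}$). *)

theory Defs
  imports "HOL-Combinatorics.Permutations"
begin

text \<open>Elements of Z^k are represented as functions nat => int, only the
  entries at indices 1..k being relevant (paper's indexing).\<close>

definition inP :: "nat \<Rightarrow> (nat \<Rightarrow> int) \<Rightarrow> bool" where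
  "inP k \<nu> \<longleftrightarrow> (\<forall>i j. 1 \<le> i \<and> i \<le> j \<and> j \<le> k \<longrightarrow> \<nu> j \<le> \<nu> i) \<and> (\<forall>i\<in>{1..k}. 0 \<le> \<nu> i)"

definition inA :: "nat \<Rightarrow> nat \<Rightarrow> (nat \<Rightarrow> int) \<Rightarrow> bool" where
  "inA k n \<nu> \<longleftrightarrow> (\<forall>i j. 1 \<le> i \<and> i \<le> j \<and> j \<le> k \<longrightarrow> \<nu> j \<le> \<nu> i)
       \<and> (\<forall>i\<in>{1..k}. 0 < \<nu> i \<and> \<nu> i \<le> int n)"

text \<open>Extension of nu to Z by nu_(i+k) = nu_i - n.\<close>
definition ext :: "nat \<Rightarrow> nat \<Rightarrow> (nat \<Rightarrow> int) \<Rightarrow> int \<Rightarrow> int" where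
  "ext k n \<nu> i = \<nu> (nat ((i - 1) mod int k + 1)) - int n * ((i - 1) div int k)"

definition tau :: "int \<Rightarrow> int" where "tau m = m - 1"
definition tau_inv :: "int \<Rightarrow> int" where "tau_inv m = m + 1"

definition sigma :: "nat \<Rightarrow> nat \<Rightarrow> int \<Rightarrow> int" where
  "sigma k i m = (if m mod int k = int i mod int k then m + 1
                  else if m mod int k = (int i + 1) mod int k then m - 1 else m)"

text \<open>Affine symmetric group: generated by tau and the sigma_i (0 <= i < k);
  the generating set below is closed under inverses.\<close>
inductive_set affS :: "nat \<Rightarrow> (int \<Rightarrow> int) set" for k :: nat where
  affS_id: "id \<in> affS k"
| affS_tau: "w \<in> affS k \<Longrightarrow> w \<circ> tau \<in> affS k"
| affS_tau_inv: "w \<in> affS k \<Longrightarrow> w \<circ> tau_inv \<in> affS k"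
| affS_sigma: "w \<in> affS k \<Longrightarrow> i < k \<Longrightarrow> w \<circ> sigma k i \<in> affS k"

definition affOrbit :: "nat \<Rightarrow> nat \<Rightarrow> (nat \<Rightarrow> int) \<Rightarrow> (int \<Rightarrow> int) set" where
  "affOrbit k n \<nu> = {ext k n \<nu> \<circ> w | w. w \<in> affS k}"

definition mcount :: "nat \<Rightarrow> int \<Rightarrow> (nat \<Rightarrow> int) \<Rightarrow> nat" where
  "mcount k j \<nu> = card {i \<in> {1..k}. \<nu> i = j}"

text \<open>Coxeter length of a permutation of [k] = number of inversions.\<close>
definition invs :: "nat \<Rightarrow> (nat \<Rightarrow> nat) \<Rightarrow> nat" where
  "invs k w = card {(i, j). i \<in> {1..k} \<and> j \<in> {1..k} \<and> i < j \<and> w j < w i}"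

text \<open>S^nu: minimal length representatives of the right cosets S_nu w,
  S_nu = stabiliser of nu under nu o w.\<close>
definition Smin :: "nat \<Rightarrow> (nat \<Rightarrow> int) \<Rightarrow> (nat \<Rightarrow> nat) set" where
  "Smin k \<nu> = {w. w permutes {1..k} \<and>
     (\<forall>u. u permutes {1..k} \<and> (\<forall>i\<in>{1..k}. \<nu> (u i) = \<nu> i) \<longrightarrow> invs k w \<le> invs k (u \<circ> w))}"

text \<open>N^lambda_{mu nu}; the condition sum alpha = d is written as
  n * sum alpha = |mu| + |nu| - |lambda|.\<close>
definition Ncoef :: "nat \<Rightarrow> nat \<Rightarrow> (nat \<Rightarrow> int) \<Rightarrow> (nat \<Rightarrow> int) \<Rightarrow> (nat \<Rightarrow> int) \<Rightarrow> nat" where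
  "Ncoef k n la \<mu> \<nu> = card {(w, w'). w \<in> Smin k \<mu> \<and> w' \<in> Smin k \<nu> \<and>
     (\<exists>\<alpha> :: nat \<Rightarrow> int. (\<forall>i\<in>{1..k}. \<mu> (w i) + \<nu> (w' i) = la i + int n * \<alpha> i)
        \<and> int n * (\<Sum>i\<in>{1..k}. \<alpha> i) = (\<Sum>i\<in>{1..k}. \<mu> i) + (\<Sum>i\<in>{1..k}. \<nu> i) - (\<Sum>i\<in>{1..k}. la i))}"

text \<open>Multinomial coefficient N choose (f 0, f 1, ...), f finitely supported
  with parts summing to N.\<close>
definition multinom :: "nat \<Rightarrow> (nat \<Rightarrow> nat) \<Rightarrow> nat" where
  "multinom N f = fact N div (\<Prod>j\<in>{j. f j \<noteq> 0}. fact (f j))"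

end

theory Submission
  imports Defs "HOL-Combinatorics.Multiset_Permutations"
begin


definition invset :: "nat \<Rightarrow> (nat \<Rightarrow> nat) \<Rightarrow> (nat \<times> nat) set" where
  "invset k w = {(i, j). i \<in> {1..k} \<and> j \<in> {1..k} \<and> i < j \<and> w j < w i}"

lemma invs_invset: "invs k w = card (invset k w)"
  by (simp add: invs_def invset_def)

lemma finite_invset: "finite (invset k w)"
  by (rule finite_subset[of _ "{1..k} \<times> {1..k}"]) (auto simp: invset_def)

lemma invs_swap:
  assumes "1 \<le> i" "i < j" "j \<le> k" "x j < x i"
  shows "invs k (x \<circ> Transposition.transpose i j) < invs k x"
proof -
  define s where "s = Transposition.transpose i j"
  have s: "\<And>c. s c = (if c = i then j else if c = j then i else c)"
    by (simp add: s_def transpose_def)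
  define \<phi> where "\<phi> = (\<lambda>(a::nat, b::nat). if s a < s b then (s a, s b) else (a, b))"
  have sub: "\<phi> ` invset k (x \<circ> s) \<subseteq> invset k x - {(i, j)}"
  proof
    fix p assume "p \<in> \<phi> ` invset k (x \<circ> s)"
    then obtain a b where ab: "(a, b) \<in> invset k (x \<circ> s)" and p: "p = \<phi> (a, b)" by auto
    from ab have a: "a \<in> {1..k}" "b \<in> {1..k}" "a < b" "x (s b) < x (s a)"
      by (auto simp: invset_def)
    show "p \<in> invset k x - {(i, j)}"
      using a assms unfolding p \<phi>_def invset_def s
      by (auto split: if_splits)
  qed
  have inj: "inj_on \<phi> (invset k (x \<circ> s))"
  proof (rule inj_onI)
    fix p q assume p: "p \<in> invset k (x \<circ> s)" and q: "q \<in> invset k (x \<circ> s)" and e: "\<phi> p = \<phi> q"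
    obtain a b where [simp]: "p = (a, b)" by (cases p)
    obtain c d where [simp]: "q = (c, d)" by (cases q)
    from p q have "a < b" "c < d" by (auto simp: invset_def)
    with e show "p = q" unfolding \<phi>_def s by (auto split: if_splits)
  qed
  have "invs k (x \<circ> s) = card (\<phi> ` invset k (x \<circ> s))"
    by (simp add: invs_invset card_image[OF inj])
  also have "\<dots> \<le> card (invset k x - {(i, j)})"
    by (rule card_mono[OF _ sub]) (simp add: finite_invset)
  also have "\<dots> < card (invset k x)"
  proof -
    have "(i, j) \<in> invset k x" using assms by (auto simp: invset_def)
    thus ?thesis by (rule card_Diff1_less[OF finite_invset])
  qed
  finally show ?thesis by (simp add: s_def invs_invset)
qed

lemma Smin_levels:
  assumes w: "w \<in> Smin k \<nu>" and ij: "i \<in> {1..k}" "j \<in> {1..k}" "i < j" and eq: "\<nu> (w i) = \<nu> (w j)"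
  shows "w i < w j"
proof (rule ccontr)
  assume "\<not> w i < w j"
  have p: "w permutes {1..k}" using w by (simp add: Smin_def)
  have "w i \<noteq> w j" using permutes_inj[OF p] ij by (auto dest: injD)
  with \<open>\<not> w i < w j\<close> have lt: "w j < w i" by simp
  define u where "u = Transposition.transpose (w i) (w j)"
  have wi: "w i \<in> {1..k}" "w j \<in> {1..k}" using permutes_in_image[OF p] ij by auto
  have up: "u permutes {1..k}" unfolding u_def using wi by (rule permutes_swap_id)
  have us: "\<forall>y\<in>{1..k}. \<nu> (u y) = \<nu> y" using eq by (auto simp: u_def transpose_def)
  have "invs k w \<le> invs k (u \<circ> w)" using w up us by (auto simp: Smin_def)
  moreover have "u \<circ> w = w \<circ> Transposition.transpose i j"
  proof
    fix c
    have "inj w" using permutes_inj[OF p] .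
    then show "(u \<circ> w) c = (w \<circ> Transposition.transpose i j) c"
      by (auto simp: u_def transpose_def dest: injD)
  qed
  moreover have "invs k (w \<circ> Transposition.transpose i j) < invs k w"
    using ij lt by (intro invs_swap) auto
  ultimately show False by simp
qed

lemma card_below_eq:
  fixes T :: "nat set"
  assumes "finite T" "a \<in> T" "b \<in> T" "card {y\<in>T. y < a} = card {y\<in>T. (y::nat) < b}"
  shows "a = b"
proof (rule ccontr)
  assume "a \<noteq> b"
  { fix a b :: nat assume ab: "a \<in> T" "b \<in> T" "a < b"
    have "{y\<in>T. y < a} \<subset> {y\<in>T. y < b}" using ab by auto
    hence "card {y\<in>T. y < a} < card {y\<in>T. y < b}" using assms(1) by (intro psubset_card_mono) auto }
  note * = this
  show False
  proof (cases "a < b")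
    case True with *[of a b] assms show False by simp
  next
    case False with \<open>a \<noteq> b\<close> *[of b a] assms show False by simp
  qed
qed

lemma level_card:
  fixes k :: nat
  assumes p: "w permutes {1..k}" and lv: "\<forall>i\<in>{1..k}. \<forall>j\<in>{1..k}. i < j \<and> \<nu> (w i) = \<nu> (w j) \<longrightarrow> w i < w j"
    and i: "i \<in> {1..k}"
  shows "card {y \<in> {y\<in>{1..k}. \<nu> y = \<nu> (w i)}. y < w i} = card {j\<in>{1..k}. j < i \<and> \<nu> (w j) = \<nu> (w i)}"
proof -
  have "w ` {j\<in>{1..k}. j < i \<and> \<nu> (w j) = \<nu> (w i)} = {y \<in> {y\<in>{1..k}. \<nu> y = \<nu> (w i)}. y < w i}"
  proof (intro equalityI subsetI)
    fix y assume "y \<in> w ` {j\<in>{1..k}. j < i \<and> \<nu> (w j) = \<nu> (w i)}"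
    then obtain j where j: "j \<in> {1..k}" "j < i" "\<nu> (w j) = \<nu> (w i)" "y = w j" by auto
    have "w j < w i" using lv i j(1,2,3) by blast
    moreover have "w j \<in> {1..k}" using permutes_in_image[OF p] j(1) by blast
    ultimately show "y \<in> {y \<in> {y\<in>{1..k}. \<nu> y = \<nu> (w i)}. y < w i}"
      using j by simp
  next
    fix y assume y: "y \<in> {y \<in> {y\<in>{1..k}. \<nu> y = \<nu> (w i)}. y < w i}"
    have "y \<in> w ` {1..k}" using y permutes_image[OF p] by simp
    then obtain j where j: "j \<in> {1..k}" "y = w j" by blast
    have "j \<noteq> i" using y j by auto
    moreover have "\<not> i < j"
    proof
      assume "i < j"
      moreover have "\<nu> (w i) = \<nu> (w j)" using y j by simp
      ultimately have "w i < w j" using lv i j(1) by blast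
      then show False using y j by simp
    qed
    ultimately have "j < i" by simp
    then show "y \<in> w ` {j\<in>{1..k}. j < i \<and> \<nu> (w j) = \<nu> (w i)}" using j y by auto
  qed
  moreover have "inj w" using permutes_inj[OF p] .
  moreover have "card (w ` {j\<in>{1..k}. j < i \<and> \<nu> (w j) = \<nu> (w i)}) = card {j\<in>{1..k}. j < i \<and> \<nu> (w j) = \<nu> (w i)}"
    using card_image[OF inj_on_subset[OF \<open>inj w\<close> subset_UNIV]] by blast
  ultimately show ?thesis by simp
qed

lemma levels_unique:
  fixes k :: nat
  assumes p: "w permutes {1..k}" and p': "w' permutes {1..k}"
    and lv: "\<forall>i\<in>{1..k}. \<forall>j\<in>{1..k}. i < j \<and> \<nu> (w i) = \<nu> (w j) \<longrightarrow> w i < w j"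
    and lv': "\<forall>i\<in>{1..k}. \<forall>j\<in>{1..k}. i < j \<and> \<nu> (w' i) = \<nu> (w' j) \<longrightarrow> w' i < w' j"
    and eq: "\<forall>i\<in>{1..k}. \<nu> (w i) = \<nu> (w' i)"
  shows "w = w'"
proof
  fix i show "w i = w' i"
  proof (cases "i \<in> {1..k}")
    case False then show ?thesis using p p' by (simp add: permutes_not_in)
  next
    case True
    define T where "T = {y\<in>{1..k}. \<nu> y = \<nu> (w i)}"
    have T': "T = {y\<in>{1..k}. \<nu> y = \<nu> (w' i)}" using eq True by (simp add: T_def)
    have c1: "card {y\<in>T. y < w i} = card {j\<in>{1..k}. j < i \<and> \<nu> (w j) = \<nu> (w i)}"
      unfolding T_def by (rule level_card[OF p lv True])
    have c2: "card {y\<in>T. y < w' i} = card {j\<in>{1..k}. j < i \<and> \<nu> (w' j) = \<nu> (w' i)}"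
      unfolding T' by (rule level_card[OF p' lv' True])
    have "{j\<in>{1..k}. j < i \<and> \<nu> (w j) = \<nu> (w i)} = {j\<in>{1..k}. j < i \<and> \<nu> (w' j) = \<nu> (w' i)}"
      proof (rule Collect_cong) fix j have "j \<in> {1..k} \<Longrightarrow> \<nu> (w j) = \<nu> (w' j)" using eq by blast moreover have "\<nu> (w i) = \<nu> (w' i)" using eq True by blast ultimately show "(j \<in> {1..k} \<and> j < i \<and> \<nu> (w j) = \<nu> (w i)) = (j \<in> {1..k} \<and> j < i \<and> \<nu> (w' j) = \<nu> (w' i))" by metis qed
    with c1 c2 have cc: "card {y\<in>T. y < w i} = card {y\<in>T. y < w' i}" by simp
    have "w i \<in> T" using True permutes_in_image[OF p] by (simp add: T_def)
    moreover have "w' i \<in> T" using True permutes_in_image[OF p'] by (simp add: T')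
    moreover have "finite T" by (simp add: T_def)
    ultimately show ?thesis using card_below_eq cc by blast
  qed
qed


declare upt_Suc[simp del]

definition Mv :: "nat \<Rightarrow> (nat \<Rightarrow> int) \<Rightarrow> int multiset" where
  "Mv k \<nu> = image_mset \<nu> (mset_set {1..k})"

definition Phi :: "nat \<Rightarrow> (nat \<Rightarrow> int) \<Rightarrow> (nat \<Rightarrow> nat) \<Rightarrow> int list" where
  "Phi k \<nu> w = map (\<lambda>i. \<nu> (w i)) [1..<Suc k]"

lemma mset_map_upt: "mset (map f [1..<Suc k]) = image_mset f (mset_set {1..k})"
  by (simp only: mset_map mset_upt atLeastLessThanSuc_atLeastAtMost)

lemma Phi_in:
  assumes p: "w permutes {1..k}"
  shows "Phi k \<nu> w \<in> permutations_of_multiset (Mv k \<nu>)"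
proof -
  have "mset (Phi k \<nu> w) = image_mset (\<lambda>i. \<nu> (w i)) (mset_set {1..k})"
    unfolding Phi_def by (rule mset_map_upt)
  also have "\<dots> = image_mset \<nu> (image_mset w (mset_set {1..k}))"
    by (simp add: image_mset.compositionality o_def)
  also have "image_mset w (mset_set {1..k}) = mset_set {1..k}"
    using image_mset_mset_set[OF inj_on_subset[OF permutes_inj[OF p] subset_UNIV]] permutes_image[OF p]
    by simp
  finally show ?thesis by (simp add: Mv_def permutations_of_multisetI)
qed

lemma Phi_eq_iff:
  "Phi k \<nu> w = Phi k \<nu> w' \<longleftrightarrow> (\<forall>i\<in>{1..k}. \<nu> (w i) = \<nu> (w' i))"
  by (auto simp: Phi_def map_eq_conv atLeastLessThanSuc_atLeastAtMost)

lemma Phi_inj: "inj_on (Phi k \<nu>) (Smin k \<nu>)"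
proof (rule inj_onI)
  fix w w' assume w: "w \<in> Smin k \<nu>" and w': "w' \<in> Smin k \<nu>" and e: "Phi k \<nu> w = Phi k \<nu> w'"
  show "w = w'"
  proof (rule levels_unique[of w k w' \<nu>])
    show "w permutes {1..k}" "w' permutes {1..k}" using w w' by (auto simp: Smin_def)
    show "\<forall>i\<in>{1..k}. \<forall>j\<in>{1..k}. i < j \<and> \<nu> (w i) = \<nu> (w j) \<longrightarrow> w i < w j"
      using Smin_levels[OF w] by blast
    show "\<forall>i\<in>{1..k}. \<forall>j\<in>{1..k}. i < j \<and> \<nu> (w' i) = \<nu> (w' j) \<longrightarrow> w' i < w' j"
      using Smin_levels[OF w'] by blast
    show "\<forall>i\<in>{1..k}. \<nu> (w i) = \<nu> (w' i)" using e by (simp add: Phi_eq_iff)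
  qed
qed

lemma exists_perm:
  assumes bs: "bs \<in> permutations_of_multiset (Mv k \<nu>)"
  shows "\<exists>x. x permutes {1..k} \<and> Phi k \<nu> x = bs"
proof -
  have "mset bs = mset (map \<nu> [1..<Suc k])"
    using permutations_of_multisetD[OF bs] unfolding Mv_def mset_map_upt by simp
  then obtain p where p: "p permutes {..<length (map \<nu> [1..<Suc k])}"
    and pl: "permute_list p (map \<nu> [1..<Suc k]) = bs"
    by (rule mset_eq_permutation)
  have p': "p permutes {..<k}" using p by (simp del: upt_Suc)
  define x where "x = (\<lambda>j::nat. if j \<in> {1..k} then p (j - 1) + 1 else j)"
  have bij: "bij_betw x {1..k} {1..k}"
  proof -
    have b1: "bij_betw (\<lambda>j. j - 1) {1..k} {..<k}"
      by (rule bij_betw_byWitness[where f'="\<lambda>j. j + 1"]) auto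
    have b2: "bij_betw p {..<k} {..<k}" using permutes_imp_bij[OF p'] .
    have b3: "bij_betw (\<lambda>j. j + 1) {..<k} {1..k}"
      by (rule bij_betw_byWitness[where f'="\<lambda>j. j - 1"]) auto
    have "bij_betw ((\<lambda>j. j + 1) \<circ> (p \<circ> (\<lambda>j. j - 1))) {1..k} {1..k}"
      by (rule bij_betw_trans[OF bij_betw_trans[OF b1 b2] b3])
    then show ?thesis by (rule bij_betw_cong[THEN iffD1, rotated]) (auto simp: x_def)
  qed
  have xp: "x permutes {1..k}"
    by (rule bij_imp_permutes[OF bij]) (auto simp: x_def)
  have "Phi k \<nu> x = bs"
  proof (rule nth_equalityI)
    show "length (Phi k \<nu> x) = length bs" using pl by (simp add: Phi_def flip: pl)
    fix i assume "i < length (Phi k \<nu> x)"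
    then have i: "i < k" by (simp add: Phi_def)
    have "bs ! i = map \<nu> [1..<Suc k] ! p i"
      using permute_list_nth[OF p, of i] i pl by simp
    also have "\<dots> = \<nu> (p i + 1)" using permutes_in_image[OF p', of i] i by simp
    finally show "Phi k \<nu> x ! i = bs ! i" using i by (simp add: Phi_def x_def)
  qed
  then show ?thesis using xp by blast
qed

lemma Phi_bij: "bij_betw (Phi k \<nu>) (Smin k \<nu>) (permutations_of_multiset (Mv k \<nu>))"
proof (rule bij_betw_imageI[OF Phi_inj])
  show "Phi k \<nu> ` Smin k \<nu> = permutations_of_multiset (Mv k \<nu>)"
  proof (intro equalityI subsetI)
    fix bs assume "bs \<in> Phi k \<nu> ` Smin k \<nu>"
    then show "bs \<in> permutations_of_multiset (Mv k \<nu>)" using Phi_in by (auto simp: Smin_def)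
  next
    fix bs assume bs: "bs \<in> permutations_of_multiset (Mv k \<nu>)"
    define P where "P = (\<lambda>y. y permutes {1..k} \<and> Phi k \<nu> y = bs)"
    obtain x where "P x" using exists_perm[OF bs] by (auto simp: P_def)
    then obtain y where y: "P y" and ymin: "\<And>z. P z \<Longrightarrow> invs k y \<le> invs k z"
      using ex_has_least_nat[of P x "invs k"] by blast
    have "y \<in> Smin k \<nu>"
      unfolding Smin_def
    proof (intro CollectI conjI allI impI)
      show "y permutes {1..k}" using y by (simp add: P_def)
      fix u assume u: "u permutes {1..k} \<and> (\<forall>i\<in>{1..k}. \<nu> (u i) = \<nu> i)"
      have "P (u \<circ> y)"
        unfolding P_def
      proof
        show "u \<circ> y permutes {1..k}" using u y by (simp add: P_def permutes_compose)
        have "\<forall>i\<in>{1..k}. \<nu> ((u \<circ> y) i) = \<nu> (y i)"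
          using u y permutes_in_image[of y "{1..k}"] by (auto simp: P_def)
        then have "Phi k \<nu> (u \<circ> y) = Phi k \<nu> y" unfolding Phi_eq_iff .
        then show "Phi k \<nu> (u \<circ> y) = bs" using y by (simp add: P_def)
      qed
      then show "invs k y \<le> invs k (u \<circ> y)" by (rule ymin)
    qed
    then show "bs \<in> Phi k \<nu> ` Smin k \<nu>" using y by (auto simp: P_def)
  qed
qed



lemma card_pairs_bij:
  assumes f: "bij_betw f A A'" and g: "bij_betw g B B'"
  shows "card {(a, b). a \<in> A \<and> b \<in> B \<and> P (f a) (g b)} = card {(x, y). x \<in> A' \<and> y \<in> B' \<and> P x y}"
proof -
  have inj: "inj_on (map_prod f g) {(a, b). a \<in> A \<and> b \<in> B \<and> P (f a) (g b)}"
    by (rule inj_on_subset[OF map_prod_inj_on[OF bij_betw_imp_inj_on[OF f] bij_betw_imp_inj_on[OF g]]]) auto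
  have "map_prod f g ` {(a, b). a \<in> A \<and> b \<in> B \<and> P (f a) (g b)} = {(x, y). x \<in> A' \<and> y \<in> B' \<and> P x y}"
  proof (intro equalityI subsetI)
    fix z assume "z \<in> map_prod f g ` {(a, b). a \<in> A \<and> b \<in> B \<and> P (f a) (g b)}"
    then show "z \<in> {(x, y). x \<in> A' \<and> y \<in> B' \<and> P x y}"
      using bij_betw_apply[OF f] bij_betw_apply[OF g] by auto
  next
    fix z assume z: "z \<in> {(x, y). x \<in> A' \<and> y \<in> B' \<and> P x y}"
    obtain x y where [simp]: "z = (x, y)" by (cases z)
    from z have xy: "x \<in> A'" "y \<in> B'" "P x y" by auto
    obtain a where a: "a \<in> A" "f a = x" using xy(1) bij_betw_imp_surj_on[OF f] by blast
    obtain b where b: "b \<in> B" "g b = y" using xy(2) bij_betw_imp_surj_on[OF g] by blast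
    show "z \<in> map_prod f g ` {(a, b). a \<in> A \<and> b \<in> B \<and> P (f a) (g b)}"
      using a b xy by (auto intro!: image_eqI[of _ _ "(a, b)"])
  qed
  with card_image[OF inj] show ?thesis by simp
qed

definition Cnd :: "nat \<Rightarrow> nat \<Rightarrow> (nat \<Rightarrow> int) \<Rightarrow> int list \<Rightarrow> int list \<Rightarrow> bool" where
  "Cnd k n la as bs \<longleftrightarrow> (\<forall>i<k. int n dvd (as ! i + bs ! i - la (Suc i)))"

lemma Phi_nth: "i < k \<Longrightarrow> Phi k \<nu> w ! i = \<nu> (w (Suc i))"
  by (simp add: Phi_def nth_append)

lemma Cnd_Phi:
  "Cnd k n la (Phi k mu w) (Phi k nu w') \<longleftrightarrow> (\<forall>i\<in>{1..k}. int n dvd (mu (w i) + nu (w' i) - la i))"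
proof -
  have "(\<forall>i\<in>{1..k}. int n dvd (mu (w i) + nu (w' i) - la i)) \<longleftrightarrow>
        (\<forall>i<k. int n dvd (mu (w (Suc i)) + nu (w' (Suc i)) - la (Suc i)))"
  proof
    assume H: "\<forall>i\<in>{1..k}. int n dvd (mu (w i) + nu (w' i) - la i)"
    show "\<forall>i<k. int n dvd (mu (w (Suc i)) + nu (w' (Suc i)) - la (Suc i))"
      using H by auto
  next
    assume H: "\<forall>i<k. int n dvd (mu (w (Suc i)) + nu (w' (Suc i)) - la (Suc i))"
    show "\<forall>i\<in>{1..k}. int n dvd (mu (w i) + nu (w' i) - la i)"
    proof
      fix i assume i: "i \<in> {1..k}"
      then obtain j where "i = Suc j" "j < k" by (cases i) auto
      then show "int n dvd (mu (w i) + nu (w' i) - la i)" using H by simp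
    qed
  qed
  then show ?thesis by (simp add: Cnd_def Phi_nth)
qed

lemma alpha_iff:
  assumes w: "w permutes {1..k}" and w': "w' permutes {1..k}"
  shows "(\<exists>\<alpha> :: nat \<Rightarrow> int. (\<forall>i\<in>{1..k}. mu (w i) + nu (w' i) = la i + int n * \<alpha> i)
        \<and> int n * (\<Sum>i\<in>{1..k}. \<alpha> i) = (\<Sum>i\<in>{1..k}. mu i) + (\<Sum>i\<in>{1..k}. nu i) - (\<Sum>i\<in>{1..k}. la i))
     \<longleftrightarrow> (\<forall>i\<in>{1..k}. int n dvd (mu (w i) + nu (w' i) - la i))" (is "?L \<longleftrightarrow> ?R")
proof
  assume ?L then show ?R by (auto simp: algebra_simps)
next
  assume R: ?R
  define \<alpha> where "\<alpha> = (\<lambda>i. (mu (w i) + nu (w' i) - la i) div int n)"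
  have e: "\<forall>i\<in>{1..k}. mu (w i) + nu (w' i) = la i + int n * \<alpha> i"
  proof
    fix i assume "i \<in> {1..k}"
    then have "int n * \<alpha> i = mu (w i) + nu (w' i) - la i" using R by (simp add: \<alpha>_def)
    then show "mu (w i) + nu (w' i) = la i + int n * \<alpha> i" by simp
  qed
  have "int n * (\<Sum>i\<in>{1..k}. \<alpha> i) = (\<Sum>i\<in>{1..k}. int n * \<alpha> i)" by (simp add: sum_distrib_left)
  also have "\<dots> = (\<Sum>i\<in>{1..k}. mu (w i) + nu (w' i) - la i)"
    by (rule sum.cong) (use e in auto)
  also have "\<dots> = (\<Sum>i\<in>{1..k}. mu (w i)) + (\<Sum>i\<in>{1..k}. nu (w' i)) - (\<Sum>i\<in>{1..k}. la i)"
    by (simp add: sum.distrib sum_subtractf)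
  also have "(\<Sum>i\<in>{1..k}. mu (w i)) = (\<Sum>i\<in>{1..k}. mu i)"
    using sum.permute[OF w, of mu] by (simp add: o_def)
  also have "(\<Sum>i\<in>{1..k}. nu (w' i)) = (\<Sum>i\<in>{1..k}. nu i)"
    using sum.permute[OF w', of nu] by (simp add: o_def)
  finally show ?L using e by blast
qed

lemma Ncoef_lists:
  "Ncoef k n la mu nu = card {(a, b). a \<in> permutations_of_multiset (Mv k mu) \<and> b \<in> permutations_of_multiset (Mv k nu) \<and> Cnd k n la a b}"
proof -
  have "Ncoef k n la mu nu = card {(w, w'). w \<in> Smin k mu \<and> w' \<in> Smin k nu \<and> Cnd k n la (Phi k mu w) (Phi k nu w')}"
    unfolding Ncoef_def
  proof (rule arg_cong[where f=card], rule Collect_cong, clarify)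
    fix w w'
    show "(w \<in> Smin k mu \<and> w' \<in> Smin k nu \<and>
        (\<exists>\<alpha> :: nat \<Rightarrow> int. (\<forall>i\<in>{1..k}. mu (w i) + nu (w' i) = la i + int n * \<alpha> i)
        \<and> int n * (\<Sum>i\<in>{1..k}. \<alpha> i) = (\<Sum>i\<in>{1..k}. mu i) + (\<Sum>i\<in>{1..k}. nu i) - (\<Sum>i\<in>{1..k}. la i))) =
       (w \<in> Smin k mu \<and> w' \<in> Smin k nu \<and> Cnd k n la (Phi k mu w) (Phi k nu w'))"
      using alpha_iff[of w k w' mu nu la n] by (auto simp: Cnd_Phi Smin_def)
  qed
  also have "\<dots> = card {(a, b). a \<in> permutations_of_multiset (Mv k mu) \<and> b \<in> permutations_of_multiset (Mv k nu) \<and> Cnd k n la a b}"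
    by (rule card_pairs_bij[OF Phi_bij Phi_bij])
  finally show ?thesis .
qed



lemma permute_list_inj:
  assumes p: "p permutes {..<m}" and l: "length xs = m" "length ys = m"
    and e: "permute_list p xs = permute_list p ys"
  shows "xs = ys"
proof (rule nth_equalityI)
  show "length xs = length ys" using l by simp
  fix j assume j: "j < length xs"
  have "inv p j < m" using j l permutes_in_image[OF permutes_inv[OF p]] by simp
  moreover have "p (inv p j) = j" using permutes_inverses(1)[OF p] by simp
  ultimately show "xs ! j = ys ! j"
    using arg_cong[OF e, of "\<lambda>zs. zs ! inv p j"] permute_list_nth[OF p[folded l(1)]]
      permute_list_nth[OF p[folded l(2)]] l by metis
qed

lemma fiber_le:
  assumes c: "c \<in> permutations_of_multiset (image_mset f A)"
      and c': "c' \<in> permutations_of_multiset (image_mset f A)"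
  shows "card {b \<in> permutations_of_multiset A. map f b = c} \<le> card {b \<in> permutations_of_multiset A. map f b = c'}"
proof -
  have "mset c' = mset c" using c c' by (simp add: permutations_of_multisetD)
  then obtain p where p: "p permutes {..<length c}" and pc: "permute_list p c = c'"
    by (rule mset_eq_permutation)
  have "inj_on (permute_list p) {b \<in> permutations_of_multiset A. map f b = c}"
  proof (rule inj_onI)
    fix x y assume x: "x \<in> {b \<in> permutations_of_multiset A. map f b = c}"
      and y: "y \<in> {b \<in> permutations_of_multiset A. map f b = c}"
      and e: "permute_list p x = permute_list p y"
    have "length x = length c" "length y = length c" using x y by (auto dest: arg_cong[of _ _ length])
    then show "x = y" using permute_list_inj[OF p _ _ e] by blast
  qed
  moreover have "permute_list p ` {b \<in> permutations_of_multiset A. map f b = c}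
      \<subseteq> {b \<in> permutations_of_multiset A. map f b = c'}"
  proof
    fix z assume "z \<in> permute_list p ` {b \<in> permutations_of_multiset A. map f b = c}"
    then obtain b where b: "b \<in> permutations_of_multiset A" "map f b = c" "z = permute_list p b" by auto
    have lb: "length b = length c" using b(2) by auto
    have "mset z = mset b" using b(3) p lb by (simp add: mset_permute_list)
    moreover have "map f z = c'"
    proof -
      have pb: "p permutes {..<length b}" using p lb by simp
      have "map f z = permute_list p (map f b)" by (simp only: b(3) permute_list_map[OF pb])
      then show ?thesis using b(2) pc by simp
    qed
    ultimately show "z \<in> {b \<in> permutations_of_multiset A. map f b = c'}"
      using b(1) by (simp add: permutations_of_multiset_def)
  qed
  ultimately show ?thesis
    by (rule card_inj_on_le) simp
qed

lemma fiber_sum: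
  assumes c0: "c0 \<in> permutations_of_multiset (image_mset f A)"
    and Q: "\<And>b. b \<in> permutations_of_multiset A \<Longrightarrow> Q b = Q' (map f b)"
  shows "card {b \<in> permutations_of_multiset A. Q b} =
         card {c \<in> permutations_of_multiset (image_mset f A). Q' c} * card {b \<in> permutations_of_multiset A. map f b = c0}"
proof -
  let ?F = "\<lambda>c. {b \<in> permutations_of_multiset A. map f b = c}"
  let ?C = "{c \<in> permutations_of_multiset (image_mset f A). Q' c}"
  have "{b \<in> permutations_of_multiset A. Q b} = (\<Union>c\<in>?C. ?F c)"
  proof (intro equalityI subsetI)
    fix b assume b: "b \<in> {b \<in> permutations_of_multiset A. Q b}"
    then have "map f b \<in> permutations_of_multiset (image_mset f A)"
      by (simp add: permutations_of_multiset_def)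
    then show "b \<in> (\<Union>c\<in>?C. ?F c)" using b Q by auto
  next
    fix b assume "b \<in> (\<Union>c\<in>?C. ?F c)"
    then show "b \<in> {b \<in> permutations_of_multiset A. Q b}" using Q by auto
  qed
  moreover have "card (\<Union>c\<in>?C. ?F c) = (\<Sum>c\<in>?C. card (?F c))"
    by (rule card_UN_disjoint) auto
  ultimately have "card {b \<in> permutations_of_multiset A. Q b} = (\<Sum>c\<in>?C. card (?F c))"
    by simp
  also have "\<dots> = (\<Sum>c\<in>?C. card (?F c0))"
  proof (rule sum.cong[OF refl])
    fix c assume "c \<in> ?C"
    then have c: "c \<in> permutations_of_multiset (image_mset f A)" by simp
    show "card (?F c) = card (?F c0)"
      using fiber_le[OF c c0] fiber_le[OF c0 c] by simp
  qed
  finally show ?thesis by simp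
qed



definition rr :: "nat \<Rightarrow> int \<Rightarrow> int" where "rr n x = (x - 1) mod int n + 1"

lemma rr_range: assumes "n \<ge> 1" shows "rr n x \<in> {1..int n}"
proof -
  have "0 < int n" using assms by simp
  then have "0 \<le> (x - 1) mod int n" "(x - 1) mod int n < int n" by simp_all
  then show ?thesis unfolding rr_def by simp
qed

lemma rr_eq_iff:
  assumes "n \<ge> 1" "1 \<le> v" "v \<le> int n"
  shows "rr n x = v \<longleftrightarrow> int n dvd (x - v)"
proof -
  have vv: "(v - 1) mod int n = v - 1" by (rule mod_pos_pos_trivial) (use assms in auto)
  have "rr n x = v \<longleftrightarrow> (x - 1) mod int n = v - 1" unfolding rr_def by arith
  also have "\<dots> \<longleftrightarrow> (x - 1) mod int n = (v - 1) mod int n" by (simp only: vv)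
  also have "\<dots> \<longleftrightarrow> int n dvd (x - v)" by (simp add: mod_eq_dvd_iff)
  finally show ?thesis .
qed

lemma rr_dvd: "int n dvd (rr n x - x)"
proof -
  have "rr n x - x = - ((x - 1) - (x - 1) mod int n)" by (simp add: rr_def)
  then show ?thesis by (simp only: dvd_minus_iff dvd_minus_mod)
qed

lemma dvd_shift_iff:
  assumes "n \<ge> 1" "0 \<le> u" "u < int n" "0 \<le> x"
  shows "int n dvd (x - u) \<longleftrightarrow> (\<exists>j::nat. x = u + int j * int n)"
proof
  assume "int n dvd (x - u)"
  then obtain t where t: "x - u = int n * t" by (auto elim: dvdE)
  have "t \<ge> 0"
  proof (rule ccontr)
    assume "\<not> t \<ge> 0"
    then have "t \<le> -1" by simp
    then have "int n * t \<le> - int n" using assms(1) by (metis mult_left_mono mult_minus1_right of_nat_0_le_iff)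
    then show False using t assms by simp
  qed
  then show "\<exists>j::nat. x = u + int j * int n" using t by (intro exI[of _ "nat t"]) (simp add: algebra_simps)
next
  assume "\<exists>j::nat. x = u + int j * int n"
  then show "int n dvd (x - u)" by auto
qed

lemma multinom_part:
  fixes A :: "int multiset" and e :: "nat \<Rightarrow> int"
  assumes n: "n \<ge> 1" and v: "1 \<le> v" "v \<le> int n" and inj: "inj e"
    and E: "\<And>x. x \<in># A \<Longrightarrow> rr n x = v \<longleftrightarrow> (\<exists>j. x = e j)"
  shows "multinom (count (image_mset (rr n) A) v) (\<lambda>j. count A (e j)) *
           (\<Prod>x\<in>{x\<in>set_mset A. rr n x = v}. fact (count A x)) = fact (count (image_mset (rr n) A) v)"
proof -
  define Av where "Av = filter_mset (\<lambda>x. rr n x = v) A"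
  define T where "T = {x\<in>set_mset A. rr n x = v}"
  have sAv: "set_mset Av = T" by (auto simp: Av_def T_def)
  have cAv: "\<And>x. x \<in> T \<Longrightarrow> count Av x = count A x" by (auto simp: Av_def T_def)
  have size: "size Av = count (image_mset (rr n) A) v"
    by (simp add: count_conv_size_mset filter_mset_image_mset Av_def)
  have PAv: "(\<Prod>x\<in>set_mset Av. fact (count Av x) :: nat) = (\<Prod>x\<in>T. fact (count A x))"
    unfolding sAv by (rule prod.cong) (simp_all add: cAv)
  have bij: "bij_betw e {j. count A (e j) \<noteq> 0} T"
  proof (rule bij_betw_imageI)
    show "inj_on e {j. count A (e j) \<noteq> 0}" using inj by (rule inj_on_subset) simp
    show "e ` {j. count A (e j) \<noteq> 0} = T"
    proof (intro equalityI subsetI)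
      fix x assume "x \<in> e ` {j. count A (e j) \<noteq> 0}"
      then obtain j where "x = e j" "count A (e j) \<noteq> 0" by auto
      then show "x \<in> T" using E[of x] by (auto simp: T_def)
    next
      fix x assume "x \<in> T"
      then have "x \<in># A" "rr n x = v" by (auto simp: T_def)
      then obtain j where "x = e j" using E by blast
      then show "x \<in> e ` {j. count A (e j) \<noteq> 0}" using \<open>x \<in># A\<close> by auto
    qed
  qed
  have D: "(\<Prod>j\<in>{j. count A (e j) \<noteq> 0}. fact (count A (e j)) :: nat) = (\<Prod>x\<in>T. fact (count A x))"
    using prod.reindex_bij_betw[OF bij, of "\<lambda>x. fact (count A x)"] by simp
  have dv: "(\<Prod>x\<in>T. fact (count A x) :: nat) dvd fact (count (image_mset (rr n) A) v)"
    using card_permutations_of_multiset(2)[of Av] unfolding PAv size by simp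
  show ?thesis
    unfolding multinom_def D T_def[symmetric] using dv by simp
qed



lemma prod_int_interval: "(\<Prod>v\<in>{1..int n}. f v) = (\<Prod>i\<in>{1..n}. f (int i))"
proof -
  have "bij_betw int {1..n} {1..int n}"
  proof (rule bij_betw_imageI)
    show "inj_on int {1..n}" by simp
    show "int ` {1..n} = {1..int n}"
    proof (intro equalityI subsetI)
      fix x assume "x \<in> {1..int n}" then show "x \<in> int ` {1..n}"
        by (intro image_eqI[of _ _ "nat x"]) auto
    qed auto
  qed
  from prod.reindex_bij_betw[OF this, of f] show ?thesis by simp
qed

lemma prod_assembly:
  fixes A :: "int multiset"
  assumes n: "n \<ge> 1" and nonneg: "\<forall>x\<in>#A. 0 \<le> x"
  shows "multinom (count (image_mset (rr n) A) (int n)) (\<lambda>j. count A (int j * int n)) *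
     (\<Prod>i\<in>{1..n-1}. multinom (count (image_mset (rr n) A) (int i)) (\<lambda>j. count A (int i + int j * int n))) *
     (\<Prod>x\<in>set_mset A. fact (count A x)) =
     (\<Prod>y\<in>set_mset (image_mset (rr n) A). fact (count (image_mset (rr n) A) y))"
proof -
  define B where "B = image_mset (rr n) A"
  define h where "h = (\<lambda>v. (\<Prod>x\<in>{x\<in>set_mset A. rr n x = v}. fact (count A x) :: nat))"
  have PA: "(\<Prod>x\<in>set_mset A. fact (count A x) :: nat) = (\<Prod>v\<in>{1..int n}. h v)"
    unfolding h_def by (rule prod.group[symmetric]) (use rr_range[OF n] in auto)
  also have "\<dots> = (\<Prod>i\<in>{1..n}. h (int i))" by (rule prod_int_interval)
  also have "\<dots> = h (int n) * (\<Prod>i\<in>{1..n-1}. h (int i))"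
  proof -
    have "{1..n} = insert n {1..n-1}" using n by auto
    then show ?thesis using n by simp
  qed
  finally have PA: "(\<Prod>x\<in>set_mset A. fact (count A x) :: nat) = h (int n) * (\<Prod>i\<in>{1..n-1}. h (int i))" .
  have PB: "(\<Prod>y\<in>set_mset B. fact (count B y) :: nat) = (\<Prod>v\<in>{1..int n}. fact (count B v))"
  proof (rule prod.mono_neutral_left)
    show "finite {1..int n}" by simp
    show "set_mset B \<subseteq> {1..int n}" using rr_range[OF n] by (auto simp: B_def)
    show "\<forall>i\<in>{1..int n} - set_mset B. fact (count B i) = (1::nat)"
      by (auto simp: not_in_iff)
  qed
  also have "\<dots> = (\<Prod>i\<in>{1..n}. fact (count B (int i)))" by (rule prod_int_interval)
  also have "\<dots> = fact (count B (int n)) * (\<Prod>i\<in>{1..n-1}. fact (count B (int i)))"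
  proof -
    have "{1..n} = insert n {1..n-1}" using n by auto
    then show ?thesis using n by simp
  qed
  finally have PB: "(\<Prod>y\<in>set_mset B. fact (count B y) :: nat) = fact (count B (int n)) * (\<Prod>i\<in>{1..n-1}. fact (count B (int i)))" .
  have top: "multinom (count B (int n)) (\<lambda>j. count A (int j * int n)) * h (int n) = fact (count B (int n))"
    unfolding B_def h_def
  proof (rule multinom_part)
    show "inj (\<lambda>j. int j * int n)" using n by (auto intro!: injI)
    fix x assume x: "x \<in># A"
    have "rr n x = int n \<longleftrightarrow> int n dvd (x - int n)" using n by (intro rr_eq_iff) auto
    also have "\<dots> \<longleftrightarrow> int n dvd (x - 0)" by (simp add: dvd_diff_commute) (metis dvd_diff dvd_refl diff_add_cancel dvd_add)
    also have "\<dots> \<longleftrightarrow> (\<exists>j::nat. x = 0 + int j * int n)" using n nonneg x by (intro dvd_shift_iff) auto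
    finally show "rr n x = int n \<longleftrightarrow> (\<exists>j. x = int j * int n)" by simp
  qed (use n in auto)
  have mid: "multinom (count B (int i)) (\<lambda>j. count A (int i + int j * int n)) * h (int i) = fact (count B (int i))"
    if i: "i \<in> {1..n-1}" for i
    unfolding B_def h_def
  proof (rule multinom_part)
    show "inj (\<lambda>j. int i + int j * int n)" using n by (auto intro!: injI)
    fix x assume x: "x \<in># A"
    have "rr n x = int i \<longleftrightarrow> int n dvd (x - int i)" using n i by (intro rr_eq_iff) auto
    also have "\<dots> \<longleftrightarrow> (\<exists>j::nat. x = int i + int j * int n)" using n nonneg x i by (intro dvd_shift_iff) auto
    finally show "rr n x = int i \<longleftrightarrow> (\<exists>j. x = int i + int j * int n)" .
  qed (use n i in auto)
  have "multinom (count B (int n)) (\<lambda>j. count A (int j * int n)) *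
     (\<Prod>i\<in>{1..n-1}. multinom (count B (int i)) (\<lambda>j. count A (int i + int j * int n))) *
     (h (int n) * (\<Prod>i\<in>{1..n-1}. h (int i)))
     = (multinom (count B (int n)) (\<lambda>j. count A (int j * int n)) * h (int n)) *
       (\<Prod>i\<in>{1..n-1}. multinom (count B (int i)) (\<lambda>j. count A (int i + int j * int n)) * h (int i))"
    by (simp add: prod.distrib mult_ac)
  also have "\<dots> = fact (count B (int n)) * (\<Prod>i\<in>{1..n-1}. fact (count B (int i)))"
    using top mid by simp
  finally show ?thesis using PA PB by (simp add: B_def)
qed



lemma sigma_mod:
  "sigma k i m mod int k = (if m mod int k = int i mod int k then (int i + 1) mod int k
      else if m mod int k = (int i + 1) mod int k then int i mod int k else m mod int k)"
proof (cases "m mod int k = int i mod int k")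
  case True
  then have "(m + 1) mod int k = (int i + 1) mod int k" by (rule mod_add_cong) simp
  then show ?thesis using True by (simp add: sigma_def)
next
  case False
  show ?thesis
  proof (cases "m mod int k = (int i + 1) mod int k")
    case True
    then have "(m - 1) mod int k = (int i + 1 - 1) mod int k" by (rule mod_diff_cong) simp
    then show ?thesis using True False by (simp add: sigma_def)
  qed (use False in \<open>simp add: sigma_def\<close>)
qed

lemma sigma_cong:
  assumes "sigma k i a mod int k = sigma k i b mod int k"
  shows "a mod int k = b mod int k"
  using assms unfolding sigma_mod by (auto split: if_splits)

lemma affS_cong:
  assumes "w \<in> affS k"
  shows "w a mod int k = w b mod int k \<Longrightarrow> a mod int k = b mod int k"
  using assms
proof (induction arbitrary: a b rule: affS.induct)
  case affS_id then show ?case by simp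
next
  case (affS_tau w)
  have "w (a - 1) mod int k = w (b - 1) mod int k" using affS_tau.prems by (simp add: tau_def)
  then have "(a - 1) mod int k = (b - 1) mod int k" by (rule affS_tau.IH)
  then show ?case by (simp add: mod_eq_dvd_iff)
next
  case (affS_tau_inv w)
  have "w (a + 1) mod int k = w (b + 1) mod int k" using affS_tau_inv.prems by (simp add: tau_inv_def)
  then have "(a + 1) mod int k = (b + 1) mod int k" by (rule affS_tau_inv.IH)
  then show ?case by (simp add: mod_eq_dvd_iff)
next
  case (affS_sigma w i)
  have "w (sigma k i a) mod int k = w (sigma k i b) mod int k" using affS_sigma.prems by simp
  then have "sigma k i a mod int k = sigma k i b mod int k" by (rule affS_sigma.IH)
  then show ?case by (rule sigma_cong)
qed

lemma ext_in: "i \<in> {1..k} \<Longrightarrow> ext k n \<nu> (int i) = \<nu> i"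
proof -
  assume i: "i \<in> {1..k}"
  then have "(int i - 1) mod int k = int i - 1" "(int i - 1) div int k = 0"
    by (auto intro: mod_pos_pos_trivial div_pos_pos_trivial)
  then show ?thesis by (simp add: ext_def)
qed

lemma orbit_mset:
  assumes k: "k \<ge> 1" and n: "n \<ge> 1" and A: "inA k n nuc" and O: "ext k n nuc \<in> affOrbit k n nu"
  shows "Mv k nuc = image_mset (rr n) (Mv k nu)"
proof -
  obtain w where w: "w \<in> affS k" and e: "ext k n nuc = ext k n nu \<circ> w"
    using O by (auto simp: affOrbit_def)
  define \<pi> where "\<pi> = (\<lambda>i::nat. nat ((w (int i) - 1) mod int k + 1))"
  have kpos: "0 < int k" using k by simp
  have \<pi>in: "\<pi> i \<in> {1..k}" for i
  proof -
    have "0 \<le> (w (int i) - 1) mod int k" "(w (int i) - 1) mod int k < int k" using kpos by simp_all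
    then show ?thesis by (simp add: \<pi>_def nat_le_iff)
  qed
  have inj: "inj_on \<pi> {1..k}"
  proof (rule inj_onI)
    fix i j assume i: "i \<in> {1..k}" and j: "j \<in> {1..k}" and eq: "\<pi> i = \<pi> j"
    have "0 \<le> (w (int i) - 1) mod int k" "0 \<le> (w (int j) - 1) mod int k" using kpos by simp_all
    with eq have "(w (int i) - 1) mod int k = (w (int j) - 1) mod int k" by (simp add: \<pi>_def)
    then have "w (int i) mod int k = w (int j) mod int k" by (simp add: mod_eq_dvd_iff)
    then have "int i mod int k = int j mod int k" by (rule affS_cong[OF w])
    then have d: "int k dvd (int i - int j)" by (simp add: mod_eq_dvd_iff)
    show "i = j"
    proof (rule ccontr)
      assume "i \<noteq> j"
      then have "int i - int j \<noteq> 0" by simp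
      from dvd_imp_le_int[OF this d] i j show False by auto
    qed
  qed
  have im: "\<pi> ` {1..k} = {1..k}"
    by (rule endo_inj_surj) (use \<pi>in inj in auto)
  have nucv: "nuc i = rr n (nu (\<pi> i))" if i: "i \<in> {1..k}" for i
  proof -
    have "nuc i = ext k n nuc (int i)" using ext_in[OF i] by simp
    also have "\<dots> = ext k n nu (w (int i))" using e by simp
    also have "\<dots> = nu (\<pi> i) - int n * ((w (int i) - 1) div int k)" by (simp add: ext_def \<pi>_def)
    finally have eq: "nu (\<pi> i) - nuc i = int n * ((w (int i) - 1) div int k)" by simp
    have "0 < nuc i" "nuc i \<le> int n" using A i by (auto simp: inA_def)
    then have r: "1 \<le> nuc i" "nuc i \<le> int n" by simp_all
    have "rr n (nu (\<pi> i)) = nuc i" using rr_eq_iff[OF n r] eq by simp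
    then show ?thesis by simp
  qed
  have "Mv k nuc = image_mset (\<lambda>i. rr n (nu (\<pi> i))) (mset_set {1..k})"
    unfolding Mv_def by (rule image_mset_cong) (simp add: nucv)
  also have "\<dots> = image_mset (rr n) (image_mset nu (image_mset \<pi> (mset_set {1..k})))"
    by (simp add: image_mset.compositionality o_def)
  also have "image_mset \<pi> (mset_set {1..k}) = mset_set {1..k}"
    using image_mset_mset_set[OF inj] im by simp
  finally show ?thesis by (simp add: Mv_def)
qed



lemma mcount_count: "mcount k j \<nu> = count (Mv k \<nu>) j"
  by (simp add: mcount_def Mv_def count_image_mset_eq_card_vimage)

lemma size_Mv: "size (Mv k \<nu>) = k"
  by (simp add: Mv_def)

lemma length_perm_Mv: "b \<in> permutations_of_multiset (Mv k \<nu>) \<Longrightarrow> length b = k"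
  by (metis permutations_of_multisetD size_Mv size_mset)

lemma Cnd_rr:
  assumes "length b = k"
  shows "Cnd k n la a b \<longleftrightarrow> Cnd k n la a (map (rr n) b)"
proof -
  have "int n dvd (a ! i + b ! i - la (Suc i)) \<longleftrightarrow> int n dvd (a ! i + rr n (b ! i) - la (Suc i))" for i
  proof -
    have e: "a ! i + rr n (b ! i) - la (Suc i) = (a ! i + b ! i - la (Suc i)) + (rr n (b ! i) - b ! i)" by simp
    show ?thesis unfolding e by (rule dvd_add_left_iff[symmetric]) (rule rr_dvd)
  qed
  then show ?thesis using assms by (simp add: Cnd_def)
qed

lemma card_pairs_sum:
  "card {(a, b). a \<in> X \<and> b \<in> Y \<and> P a b} = (\<Sum>a\<in>X. card {b \<in> Y. P a b})"
  if "finite X" "finite Y" for X Y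
proof -
  have "{(a, b). a \<in> X \<and> b \<in> Y \<and> P a b} = Sigma X (\<lambda>a. {b \<in> Y. P a b})" by auto
  then show ?thesis using that by (simp add: card_SigmaI)
qed

theorem mainTheorem10:
  fixes k n :: nat and lam mu nu nuc :: "nat \<Rightarrow> int"
  assumes "1 \<le> k" and "1 \<le> n"
    and "inA k n lam" and "inA k n mu" and "inP k nu"
    and "inA k n nuc" and "ext k n nuc \<in> affOrbit k n nu"
  shows "Ncoef k n lam mu nu =
     Ncoef k n lam mu nuc
     * multinom (mcount k (int n) nuc) (\<lambda>j. mcount k (int j * int n) nu)
     * (\<Prod>i\<in>{1..n-1}. multinom (mcount k (int i) nuc) (\<lambda>j. mcount k (int i + int j * int n) nu))"
proof -
  define A where "A = Mv k nu"
  define B where "B = Mv k nuc"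
  have BA: "B = image_mset (rr n) A"
    unfolding A_def B_def by (rule orbit_mset) (use assms in auto)
  define LM where "LM = permutations_of_multiset (Mv k mu)"
  define R where "R = multinom (count B (int n)) (\<lambda>j. count A (int j * int n))
     * (\<Prod>i\<in>{1..n-1}. multinom (count B (int i)) (\<lambda>j. count A (int i + int j * int n)))"
  obtain c0 where c0: "c0 \<in> permutations_of_multiset B"
    using permutations_of_multiset_not_empty by blast
  define F where "F = card {b \<in> permutations_of_multiset A. map (rr n) b = c0}"
  have c0': "c0 \<in> permutations_of_multiset (image_mset (rr n) A)" using c0 BA by simp
  have fin: "finite LM" by (simp add: LM_def)
  have "Ncoef k n lam mu nu = (\<Sum>a\<in>LM. card {b \<in> permutations_of_multiset A. Cnd k n lam a b})"
    unfolding Ncoef_lists A_def LM_def by (rule card_pairs_sum) simp_all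
  also have "\<dots> = (\<Sum>a\<in>LM. card {c \<in> permutations_of_multiset B. Cnd k n lam a c} * F)"
  proof (rule sum.cong[OF refl])
    fix a
    show "card {b \<in> permutations_of_multiset A. Cnd k n lam a b} =
          card {c \<in> permutations_of_multiset B. Cnd k n lam a c} * F"
      unfolding F_def BA
    proof (rule fiber_sum[OF c0'])
      fix b assume "b \<in> permutations_of_multiset A"
      then have "length b = k" unfolding A_def by (rule length_perm_Mv)
      then show "Cnd k n lam a b = Cnd k n lam a (map (rr n) b)" by (rule Cnd_rr)
    qed
  qed
  also have "\<dots> = Ncoef k n lam mu nuc * F"
    unfolding Ncoef_lists B_def LM_def
    by (simp add: card_pairs_sum sum_distrib_right)
  finally have N: "Ncoef k n lam mu nu = Ncoef k n lam mu nuc * F" .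
  have cA: "card (permutations_of_multiset A) = card (permutations_of_multiset B) * F"
    unfolding F_def BA using fiber_sum[OF c0', of "\<lambda>_. True" "\<lambda>_. True"] by simp
  have nonneg: "\<forall>x\<in>#A. 0 \<le> x" using assms(5) by (auto simp: A_def Mv_def inP_def)
  have RP: "R * (\<Prod>x\<in>set_mset A. fact (count A x)) = (\<Prod>y\<in>set_mset B. fact (count B y))"
    unfolding R_def BA using prod_assembly[OF assms(2) nonneg] by simp
  define PA where "PA = (\<Prod>x\<in>set_mset A. fact (count A x) :: nat)"
  define PB where "PB = (\<Prod>x\<in>set_mset B. fact (count B x) :: nat)"
  have "card (permutations_of_multiset B) * R * PA = card (permutations_of_multiset B) * PB"
    using RP by (simp add: PA_def PB_def mult.assoc)
  also have "\<dots> = fact k"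
    using card_permutations_of_multiset_aux[of B] by (simp add: B_def size_Mv PB_def)
  also have "\<dots> = card (permutations_of_multiset A) * PA"
    using card_permutations_of_multiset_aux[of A] by (simp add: A_def size_Mv PA_def)
  also have "\<dots> = card (permutations_of_multiset B) * F * PA" using cA by simp
  finally have "card (permutations_of_multiset B) * F * (\<Prod>x\<in>set_mset A. fact (count A x)) =
      card (permutations_of_multiset B) * R * (\<Prod>x\<in>set_mset A. fact (count A x))"
    by (simp add: PA_def)
  moreover have "card (permutations_of_multiset B) > 0"
    using c0 by (simp add: card_gt_0_iff)
  moreover have "(\<Prod>x\<in>set_mset A. fact (count A x) :: nat) > 0"
    by (simp add: prod_pos)
  ultimately have "F = R" by simp
  then show ?thesis using N unfolding R_def A_def B_def by (simp add: mcount_count mult_ac)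
qed


end
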